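(* Let $X$ and $Y$ be nonnegative random variables with distribution functions $F_X,F_Y\in\mathcal{F}$, let $s\geq1$ be an integer and $\alpha_1,\alpha_2>0$. If $X\leq_{s\text{-IFR}}Y$, then $\alpha_1X\leq_{s\text{-IFR}}\alpha_2Y$.
   Context: $\mathcal{F}$ denotes the family of distribution functions $F$ with $F(0)=0$ whose probability distribution has support contained in $[0,\infty)$. For a nonnegative random variable $X$ with density $f_X$: $\overline{T}_{X,0}=f_X$, $\widetilde{\mu}_{X,0}=1$, and for $s\geq1$, $x\geq0$, $\overline{T}_{X,s}(x)=\frac{1}{\widetilde{\mu}_{X,s-1}}\int_x^\infty \overline{T}_{X,s-1}(t)\,dt$ with $\widetilde{\mu}_{X,s}=\int_0^\infty \overline{T}_{X,s}(t)\,dt$, and $\overline{T}_{X,s}(x)=1$ for $x<0$. We write $X\leq_{s\text{-IFR}}Y$ ("$X$ is more $s$-IFR than $Y$") if $c_s(x)=\overline{T}_{Y,s}^{-1}(\overline{T}_{X,s}(x))$ is convex. *)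

theory Defs
  imports "HOL-Probability.Probability"
begin

fun Tbar :: "(real \<Rightarrow> ennreal) \<Rightarrow> nat \<Rightarrow> real \<Rightarrow> real" where
  "Tbar f 0 x = enn2real (f x)"
| "Tbar f (Suc s) x =
     (if x < 0 then 1
      else (LINT t:{x..}|lborel. Tbar f s t) /
           (if s = 0 then 1 else (LINT t:{0..}|lborel. Tbar f s t)))"

definition mu_tilde :: "(real \<Rightarrow> ennreal) \<Rightarrow> nat \<Rightarrow> real" where
  "mu_tilde f s = (if s = 0 then 1 else (LINT t:{0..}|lborel. Tbar f s t))"

lemma Tbar_Suc_mu:
  "Tbar f (Suc s) x = (if x < 0 then 1 else (LINT t:{x..}|lborel. Tbar f s t) / mu_tilde f s)"
  by (simp add: mu_tilde_def)

definition Tbar_inv :: "(real \<Rightarrow> ennreal) \<Rightarrow> nat \<Rightarrow> real \<Rightarrow> real" where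
  "Tbar_inv f s u = Inf {y. 0 \<le> y \<and> Tbar f s y \<le> u}"

text \<open>X <=_{s-IFR} Y, expressed through densities fX, fY:
  c_s(x) = T_{Y,s}^{-1}(T_{X,s}(x)) is convex (on the support [0, infinity)).\<close>
definition s_IFR_le :: "nat \<Rightarrow> (real \<Rightarrow> ennreal) \<Rightarrow> (real \<Rightarrow> ennreal) \<Rightarrow> bool" where
  "s_IFR_le s fX fY \<longleftrightarrow> convex_on {0..} (\<lambda>x. Tbar_inv fY s (Tbar fX s x))"

end

theory Submission
  imports Defs
begin

lemma dens_props:
  fixes f :: "real \<Rightarrow> ennreal" and Z :: "'a \<Rightarrow> real"
  assumes P: "prob_space M" and D: "distributed M lborel Z f"
  shows "AE t in lborel. f t \<noteq> \<infinity>"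
    and "integrable lborel (\<lambda>t. enn2real (f t))"
    and "\<And>A. A \<in> sets borel \<Longrightarrow> (LINT t:A|lborel. enn2real (f t)) = measure M (Z -` A \<inter> space M)"
proof -
  have fm[measurable]: "f \<in> borel_measurable lborel" using D by (simp add: distributed_borel_measurable)
  have Zm[measurable]: "Z \<in> measurable M lborel" using distributed_measurable[OF D] by simp
  have em: "\<And>A. A \<in> sets borel \<Longrightarrow> emeasure M (Z -` A \<inter> space M) = (\<integral>\<^sup>+x. f x * indicator A x \<partial>lborel)"
    using distributed_emeasure[OF D] by simp
  have tot: "(\<integral>\<^sup>+x. f x \<partial>lborel) = 1"
    using em[of UNIV] P by (simp add: prob_space.emeasure_space_1)
  show fin: "AE t in lborel. f t \<noteq> \<infinity>"
    by (rule nn_integral_PInf_AE) (use tot in auto)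
  have "(\<integral>\<^sup>+x. ennreal (norm (enn2real (f x))) \<partial>lborel) \<le> (\<integral>\<^sup>+x. f x \<partial>lborel)"
    by (intro nn_integral_mono) (simp add: ennreal_enn2real_if)
  then show "integrable lborel (\<lambda>t. enn2real (f t))"
    using tot by (intro integrableI_bounded) (auto simp: top_unique intro: le_less_trans)
  fix A :: "real set" assume A[measurable]: "A \<in> sets borel"
  have "(LINT t:A|lborel. enn2real (f t)) = integral\<^sup>L lborel (\<lambda>t. indicator A t * enn2real (f t))"
    by (simp add: set_lebesgue_integral_def)
  also have "\<dots> = enn2real (\<integral>\<^sup>+ t. ennreal (indicator A t * enn2real (f t)) \<partial>lborel)"
    by (rule integral_eq_nn_integral) auto
  also have "(\<integral>\<^sup>+ t. ennreal (indicator A t * enn2real (f t)) \<partial>lborel) = (\<integral>\<^sup>+x. f x * indicator A x \<partial>lborel)"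
    by (intro nn_integral_cong_AE, use fin in eventually_elim)
       (auto simp: indicator_def ennreal_enn2real_if top.not_eq_extremum)
  finally show "(LINT t:A|lborel. enn2real (f t)) = measure M (Z -` A \<inter> space M)"
    by (simp add: em measure_def)
qed


lemma Tbar_nonneg: "0 \<le> Tbar f k x"
proof (induction k arbitrary: x)
  case 0 then show ?case by simp
next
  case (Suc k)
  have "\<And>A. 0 \<le> (LINT t:A|lborel. Tbar f k t)"
    unfolding set_lebesgue_integral_def
    by (rule Bochner_Integration.integral_nonneg) (use Suc in \<open>auto simp: indicator_def\<close>)
  then show ?case by (auto intro!: divide_nonneg_nonneg)
qed

lemma lint_affine:
  fixes F :: "real \<Rightarrow> real" and a x :: real
  assumes a: "a > 0"
  shows "(LINT t:{x..}|lborel. F (t / a)) = a * (LINT t:{x/a..}|lborel. F t)"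
proof -
  have "(LINT t:{x..}|lborel. F (t / a)) = (\<integral>t. indicator {x..} t *\<^sub>R F (t / a) \<partial>lborel)"
    by (simp add: set_lebesgue_integral_def)
  also have "\<dots> = \<bar>a\<bar> *\<^sub>R (\<integral>u. indicator {x..} (0 + a * u) *\<^sub>R F ((0 + a * u) / a) \<partial>lborel)"
    using a by (intro lborel_integral_real_affine) simp
  also have "(\<lambda>u. indicator {x..} (0 + a * u) *\<^sub>R F ((0 + a * u) / a)) = (\<lambda>u. indicator {x/a..} u *\<^sub>R F u)"
    using a by (auto simp: indicator_def fun_eq_iff pos_divide_le_eq mult.commute)
  finally show ?thesis using a by (simp add: set_lebesgue_integral_def)
qed

lemma Tbar_scale:
  fixes f g :: "real \<Rightarrow> ennreal" and Z :: "'a \<Rightarrow> real"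
  assumes P: "prob_space M" and D: "distributed M lborel Z f"
    and G: "distributed M lborel (\<lambda>\<omega>. \<alpha> * Z \<omega>) g" and a: "\<alpha> > 0"
  shows "Tbar g (Suc k) x = Tbar f (Suc k) (x / \<alpha>)"
proof (induction k arbitrary: x)
  case 0
  have Zm[measurable]: "Z \<in> measurable M borel" using distributed_measurable[OF D] by simp
  have T0: "\<And>h. Tbar h 0 = (\<lambda>t. enn2real (h t))" by (simp add: fun_eq_iff)
  show ?case
  proof (cases "x < 0")
    case True then show ?thesis using a by (simp add: divide_less_0_iff)
  next
    case False
    then have x: "\<not> x / \<alpha> < 0" using a by (simp add: divide_less_0_iff)
    have "Tbar g 1 x = measure M ((\<lambda>\<omega>. \<alpha> * Z \<omega>) -` {x..} \<inter> space M)"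
      using False dens_props(3)[OF P G, of "{x..}"] by (simp add: T0)
    also have "(\<lambda>\<omega>. \<alpha> * Z \<omega>) -` {x..} \<inter> space M = Z -` {x/\<alpha>..} \<inter> space M"
      using a by (auto simp: pos_divide_le_eq mult.commute)
    also have "measure M \<dots> = Tbar f 1 (x / \<alpha>)"
      using x dens_props(3)[OF P D, of "{x/\<alpha>..}"] by (simp add: T0)
    finally show ?thesis by simp
  qed
next
  case (Suc k)
  show ?case
  proof (cases "x < 0")
    case True then show ?thesis using a by (simp add: divide_less_0_iff)
  next
    case False
    then have x: "\<not> x / \<alpha> < 0" using a by (simp add: divide_less_0_iff)
    have e1: "(LINT t:{x..}|lborel. Tbar g (Suc k) t) = \<alpha> * (LINT t:{x/\<alpha>..}|lborel. Tbar f (Suc k) t)"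
      unfolding Suc.IH by (rule lint_affine[OF a])
    have e2: "(LINT t:{0..}|lborel. Tbar g (Suc k) t) = \<alpha> * (LINT t:{0..}|lborel. Tbar f (Suc k) t)"
      using lint_affine[OF a, where F="Tbar f (Suc k)" and x=0] unfolding Suc.IH by simp
    have "Tbar g (Suc (Suc k)) x = (\<alpha> * (LINT t:{x/\<alpha>..}|lborel. Tbar f (Suc k) t)) / (\<alpha> * (LINT t:{0..}|lborel. Tbar f (Suc k) t))"
      by (simp only: Tbar.simps(2)[of g "Suc k" x] e1 e2 if_not_P[OF False] nat.distinct if_False)
    also have "\<dots> = (LINT t:{x/\<alpha>..}|lborel. Tbar f (Suc k) t) / (LINT t:{0..}|lborel. Tbar f (Suc k) t)"
      using a by simp
    also have "\<dots> = Tbar f (Suc (Suc k)) (x / \<alpha>)"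
      by (simp only: Tbar.simps(2)[of f "Suc k" "x/\<alpha>"] if_not_P[OF x] nat.distinct if_False)
    finally show ?thesis .
  qed
qed


lemma Tbar0_fun: "Tbar h 0 = (\<lambda>t. enn2real (h t))" by (simp add: fun_eq_iff)

lemma Tbar_dich:
  fixes f :: "real \<Rightarrow> ennreal" and Z :: "'a \<Rightarrow> real"
  assumes P: "prob_space M" and D: "distributed M lborel Z f"
  shows "(\<forall>z\<ge>0. Tbar f (Suc k) z = 0) \<or>
    (\<exists>c>0. set_integrable lborel {0..} (Tbar f k) \<and>
       (\<forall>z\<ge>0. Tbar f (Suc k) z = ((LINT t:{0..}|lborel. Tbar f k t) - (LINT t:{0..z}|lborel. Tbar f k t)) / c))"
proof -
  define c where "c = (if k = 0 then 1 else (LINT t:{0..}|lborel. Tbar f k t))"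
  have T: "\<And>z. z \<ge> 0 \<Longrightarrow> Tbar f (Suc k) z = (LINT t:{z..}|lborel. Tbar f k t) / c"
    by (simp add: c_def)
  have hm[measurable]: "Tbar f k \<in> borel_measurable lborel" if "k = 0"
    using that distributed_borel_measurable[OF D] by (simp add: Tbar0_fun)
  have c0: "c \<ge> 0" unfolding c_def set_lebesgue_integral_def
    by (auto intro!: Bochner_Integration.integral_nonneg simp: Tbar_nonneg)
  show ?thesis
  proof (cases "c = 0")
    case True then show ?thesis using T by simp
  next
    case False
    have si: "set_integrable lborel {0..} (Tbar f k)"
    proof (cases "k = 0")
      case True
      have "integrable lborel (Tbar f k)" using dens_props(2)[OF P D] True
        by (simp add: Tbar0_fun)
      then show ?thesis unfolding set_integrable_def by (intro integrable_mult_indicator) auto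
    next
      case k: False
      show ?thesis
      proof (rule ccontr)
        assume "\<not> ?thesis"
        then have "c = 0" using k unfolding c_def set_integrable_def set_lebesgue_integral_def
          by (simp add: not_integrable_integral_eq)
        with False show False by simp
      qed
    qed
    have "Tbar f (Suc k) z = ((LINT t:{0..}|lborel. Tbar f k t) - (LINT t:{0..z}|lborel. Tbar f k t)) / c"
      if z: "z \<ge> 0" for z
    proof -
      have "(LINT t:{0..}|lborel. Tbar f k t) = (LINT t:{0..z} \<union> {z..}|lborel. Tbar f k t)"
        using z by (intro arg_cong[where f="\<lambda>A. LINT t:A|lborel. Tbar f k t"]) auto
      also have "\<dots> = (LINT t:{0..z}|lborel. Tbar f k t) + (LINT t:{z..}|lborel. Tbar f k t)"
        using z by (intro set_integral_Un_AE set_integrable_subset[OF si])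
                   (auto intro: AE_mp[OF AE_lborel_singleton[of z]])
      finally show ?thesis using T z by simp
    qed
    moreover have "c > 0" using False c0 by simp
    ultimately show ?thesis using si by blast
  qed
qed


lemma Tbar_props:
  fixes f :: "real \<Rightarrow> ennreal" and Z :: "'a \<Rightarrow> real"
  assumes P: "prob_space M" and D: "distributed M lborel Z f"
  shows "\<And>z1 z2. 0 \<le> z1 \<Longrightarrow> z1 \<le> z2 \<Longrightarrow> Tbar f (Suc k) z2 \<le> Tbar f (Suc k) z1"
    and "continuous_on {0..} (Tbar f (Suc k))"
    and "(Tbar f (Suc k) \<longlongrightarrow> 0) at_top"
proof -
  have "(\<forall>z1 z2. 0 \<le> z1 \<longrightarrow> z1 \<le> z2 \<longrightarrow> Tbar f (Suc k) z2 \<le> Tbar f (Suc k) z1)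
    \<and> continuous_on {0..} (Tbar f (Suc k)) \<and> (Tbar f (Suc k) \<longlongrightarrow> 0) at_top"
  proof (cases "\<forall>z\<ge>0. Tbar f (Suc k) z = 0")
    case True
    have "continuous_on {0..} (\<lambda>z::real. 0::real)" by simp
    then have c: "continuous_on {0..} (Tbar f (Suc k))"
      by (rule continuous_on_cong[THEN iffD1, rotated 2]) (use True in auto)
    have "((\<lambda>z::real. 0::real) \<longlongrightarrow> 0) at_top" by simp
    then have t: "(Tbar f (Suc k) \<longlongrightarrow> 0) at_top"
      by (rule tendsto_cong[THEN iffD1, rotated])
         (use True in \<open>auto intro: eventually_mono[OF eventually_ge_at_top[of 0]]\<close>)
    show ?thesis using c t True by (metis order_refl order_trans)
  next
    case False
    then obtain c where c: "c > 0" and si: "set_integrable lborel {0..} (Tbar f k)"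
      and eq: "\<And>z. z \<ge> 0 \<Longrightarrow> Tbar f (Suc k) z = ((LINT t:{0..}|lborel. Tbar f k t) - (LINT t:{0..z}|lborel. Tbar f k t)) / c"
      using Tbar_dich[OF P D, of k] by blast
    define I0 where "I0 = (LINT t:{0..}|lborel. Tbar f k t)"
    define J where "J = (\<lambda>z. LINT t:{0..z}|lborel. Tbar f k t)"
    have eq': "\<And>z. z \<ge> 0 \<Longrightarrow> Tbar f (Suc k) z = (I0 - J z) / c"
      using eq unfolding I0_def J_def .
    have sib: "\<And>b. set_integrable lborel {0..b} (Tbar f k)"
      by (rule set_integrable_subset[OF si]) auto
    have mono: "J z1 \<le> J z2" if "z1 \<le> z2" for z1 z2
      unfolding J_def set_lebesgue_integral_def
      using sib[of z1] sib[of z2] that unfolding set_integrable_def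
      by (intro integral_mono) (auto simp: indicator_def Tbar_nonneg)
    have m: "\<forall>z1 z2. 0 \<le> z1 \<longrightarrow> z1 \<le> z2 \<longrightarrow> Tbar f (Suc k) z2 \<le> Tbar f (Suc k) z1"
    proof (intro allI impI)
      fix z1 z2 :: real assume z: "0 \<le> z1" "z1 \<le> z2"
      have "(I0 - J z2) / c \<le> (I0 - J z1) / c"
        using mono[OF z(2)] c by (intro divide_right_mono) auto
      then show "Tbar f (Suc k) z2 \<le> Tbar f (Suc k) z1"
        by (simp only: eq'[OF z(1)] eq'[of z2] z order_trans[OF z])
    qed
    have "continuous_on UNIV J" unfolding J_def
      by (rule continuous_on_LBINT) (rule sib)
    then have "continuous_on {0..} (\<lambda>z. (I0 - J z) / c)"
      using c by (intro continuous_intros) (auto intro: continuous_on_subset)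
    then have cc: "continuous_on {0..} (Tbar f (Suc k))"
      by (rule continuous_on_cong[THEN iffD1, rotated 2]) (auto simp del: Tbar.simps simp: eq')
    have "(J \<longlongrightarrow> I0) at_top" unfolding J_def I0_def
      by (rule tendsto_set_lebesgue_integral_at_top[OF _ si]) auto
    then have "((\<lambda>z. (I0 - J z) / c) \<longlongrightarrow> (I0 - I0) / c) at_top"
      using c by (intro tendsto_intros) auto
    then have "((\<lambda>z. (I0 - J z) / c) \<longlongrightarrow> 0) at_top" by simp
    then have tt: "(Tbar f (Suc k) \<longlongrightarrow> 0) at_top"
      by (rule tendsto_cong[THEN iffD1, rotated])
         (auto simp del: Tbar.simps simp: eq' intro: eventually_mono[OF eventually_ge_at_top[of 0]])
    show ?thesis using m cc tt by blast
  qed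
  then show "\<And>z1 z2. 0 \<le> z1 \<Longrightarrow> z1 \<le> z2 \<Longrightarrow> Tbar f (Suc k) z2 \<le> Tbar f (Suc k) z1"
    and "continuous_on {0..} (Tbar f (Suc k))"
    and "(Tbar f (Suc k) \<longlongrightarrow> 0) at_top" by blast+
qed


lemma Inf_scale:
  fixes S :: "real set"
  assumes a: "a > 0" and S: "S \<noteq> {}" "S \<subseteq> {0..}"
  shows "Inf ((\<lambda>y. a * y) ` S) = a * Inf S"
proof -
  have "(\<lambda>y. a * y) (Inf S) = Inf ((\<lambda>y. a * y) ` S)"
  proof (rule continuous_at_Inf_mono)
    show "mono (\<lambda>y. a * y)" using a by (auto simp: mono_def intro: mult_left_mono)
    show "continuous (at_right (Inf S)) (\<lambda>y. a * y)" by (intro continuous_intros)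
    show "S \<noteq> {}" by fact
    show "bdd_below S" using S(2) by (auto simp: bdd_below_def)
  qed
  then show ?thesis by simp
qed

lemma conv_scale:
  fixes c d :: "real \<Rightarrow> real"
  assumes cv: "convex_on {0..} c" and a1: "a1 > 0" and a2: "a2 > 0"
    and d: "\<And>x. x \<ge> 0 \<Longrightarrow> d x = a2 * c (x / a1)"
  shows "convex_on {0..} d"
proof (rule convex_onI)
  show "convex {0::real..}" by simp
  fix t x y :: real assume t: "t > 0" "t < 1" and xy: "x \<in> {0..}" "y \<in> {0..}"
  have p: "(1 - t) *\<^sub>R x + t *\<^sub>R y \<ge> 0" using t xy by simp
  have "c ((1 - t) *\<^sub>R (x / a1) + t *\<^sub>R (y / a1)) \<le> (1 - t) * c (x / a1) + t * c (y / a1)"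
    using t xy a1 by (intro convex_onD[OF cv]) auto
  moreover have "((1 - t) *\<^sub>R x + t *\<^sub>R y) / a1 = (1 - t) *\<^sub>R (x / a1) + t *\<^sub>R (y / a1)"
    using a1 by (simp add: field_simps)
  ultimately have "a2 * c (((1 - t) *\<^sub>R x + t *\<^sub>R y) / a1) \<le> a2 * ((1 - t) * c (x / a1) + t * c (y / a1))"
    using a2 by (intro mult_left_mono) auto
  then show "d ((1 - t) *\<^sub>R x + t *\<^sub>R y) \<le> (1 - t) * d x + t * d y"
    using xy p by (simp add: d algebra_simps)
qed

lemma conv_const:
  fixes d :: "real \<Rightarrow> real"
  assumes d: "\<And>x. x \<ge> 0 \<Longrightarrow> d x = K"
  shows "convex_on {0..} d"
proof (rule convex_onI)
  show "convex {0::real..}" by simp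
  fix t x y :: real assume t: "t > 0" "t < 1" and xy: "x \<in> {0..}" "y \<in> {0..}"
  have p: "(1 - t) *\<^sub>R x + t *\<^sub>R y \<ge> 0" using t xy by simp
  show "d ((1 - t) *\<^sub>R x + t *\<^sub>R y) \<le> (1 - t) * d x + t * d y"
    using xy p by (simp add: d algebra_simps)
qed


theorem corollary1:
  fixes M :: "'a measure" and X Y :: "'a \<Rightarrow> real"
    and fX fY :: "real \<Rightarrow> ennreal" and s :: nat and \<alpha>1 \<alpha>2 :: real
  assumes "prob_space M"
    and "distributed M lborel X fX" and "distributed M lborel Y fY"
    and "AE \<omega> in M. 0 \<le> X \<omega>" and "AE \<omega> in M. 0 \<le> Y \<omega>"
    and "measure M {\<omega> \<in> space M. X \<omega> \<le> 0} = 0"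
    and "measure M {\<omega> \<in> space M. Y \<omega> \<le> 0} = 0"
    and "integrable M (\<lambda>\<omega>. X \<omega> ^ (s - 1))"
    and "integrable M (\<lambda>\<omega>. Y \<omega> ^ (s - 1))"
    and "s \<ge> 1" and "\<alpha>1 > 0" and "\<alpha>2 > 0"
    and "s_IFR_le s fX fY"
  shows "\<forall>g1 g2. distributed M lborel (\<lambda>\<omega>. \<alpha>1 * X \<omega>) g1
            \<and> distributed M lborel (\<lambda>\<omega>. \<alpha>2 * Y \<omega>) g2 \<longrightarrow> s_IFR_le s g1 g2"
proof (intro allI impI, elim conjE)
  fix g1 g2
  assume G1: "distributed M lborel (\<lambda>\<omega>. \<alpha>1 * X \<omega>) g1"
     and G2: "distributed M lborel (\<lambda>\<omega>. \<alpha>2 * Y \<omega>) g2"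
  note P = assms(1) and DX = assms(2) and DY = assms(3) and a1 = assms(11) and a2 = assms(12)
  obtain k where s: "s = Suc k" using assms(10) by (cases s) auto
  define T1 where "T1 = Tbar fX s"
  define T2 where "T2 = Tbar fY s"
  define Sf where "Sf = (\<lambda>u. {y. 0 \<le> y \<and> T2 y \<le> u})"
  define cf where "cf = (\<lambda>z. Inf (Sf (T1 z)))"
  have cvf: "convex_on {0..} cf"
    using assms(13) unfolding s_IFR_le_def cf_def Sf_def T1_def T2_def Tbar_inv_def .
  have sc1: "\<And>x. Tbar g1 s x = T1 (x / \<alpha>1)"
    unfolding s T1_def by (rule Tbar_scale[OF P DX G1 a1])
  have sc2: "\<And>x. Tbar g2 s x = T2 (x / \<alpha>2)"
    unfolding s T2_def by (rule Tbar_scale[OF P DY G2 a2])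
  have cg: "Tbar_inv g2 s (Tbar g1 s x) = Inf ((\<lambda>y. \<alpha>2 * y) ` Sf (T1 (x / \<alpha>1)))" for x
  proof -
    have "{y. 0 \<le> y \<and> Tbar g2 s y \<le> Tbar g1 s x} = (\<lambda>y. \<alpha>2 * y) ` Sf (T1 (x / \<alpha>1))"
    proof (intro set_eqI iffI)
      fix y assume "y \<in> {y. 0 \<le> y \<and> Tbar g2 s y \<le> Tbar g1 s x}"
      then have "y / \<alpha>2 \<in> Sf (T1 (x / \<alpha>1))" "y = \<alpha>2 * (y / \<alpha>2)"
        using a2 by (auto simp: Sf_def sc1 sc2)
      then show "y \<in> (\<lambda>y. \<alpha>2 * y) ` Sf (T1 (x / \<alpha>1))" by blast
    next
      fix y assume "y \<in> (\<lambda>y. \<alpha>2 * y) ` Sf (T1 (x / \<alpha>1))"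
      then show "y \<in> {y. 0 \<le> y \<and> Tbar g2 s y \<le> Tbar g1 s x}"
        using a2 by (auto simp: Sf_def sc1 sc2)
    qed
    then show ?thesis unfolding Tbar_inv_def by simp
  qed
  have T1nn: "\<And>z. T1 z \<ge> 0" and T2nn: "\<And>z. T2 z \<ge> 0" unfolding T1_def T2_def by (rule Tbar_nonneg)+
  have T1mono: "\<And>z1 z2. 0 \<le> z1 \<Longrightarrow> z1 \<le> z2 \<Longrightarrow> T1 z2 \<le> T1 z1"
    unfolding T1_def s by (rule Tbar_props(1)[OF P DX])
  have T2mono: "\<And>z1 z2. 0 \<le> z1 \<Longrightarrow> z1 \<le> z2 \<Longrightarrow> T2 z2 \<le> T2 z1"
    unfolding T2_def s by (rule Tbar_props(1)[OF P DY])
  have T1cont: "continuous_on {0..} T1" unfolding T1_def s by (rule Tbar_props(2)[OF P DX])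
  have T2lim: "(T2 \<longlongrightarrow> 0) at_top" unfolding T2_def s by (rule Tbar_props(3)[OF P DY])
  have T2small: "\<exists>y\<ge>0. T2 y < e" if e: "e > 0" for e
  proof -
    have "eventually (\<lambda>y. T2 y < e \<and> y \<ge> 0) at_top"
      using order_tendstoD(2)[OF T2lim e] eventually_ge_at_top[of "0::real"] by eventually_elim auto
    then obtain N where "\<forall>y\<ge>N. T2 y < e \<and> y \<ge> 0" unfolding eventually_at_top_linorder by blast
    then show ?thesis by blast
  qed
  show "s_IFR_le s g1 g2"
    unfolding s_IFR_le_def
  proof (cases "\<forall>z\<ge>0. Sf (T1 z) \<noteq> {}")
    case True
    show "convex_on {0..} (\<lambda>x. Tbar_inv g2 s (Tbar g1 s x))"
    proof (rule conv_scale[OF cvf a1 a2])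
      fix x :: real assume x: "x \<ge> 0"
      have "Sf (T1 (x / \<alpha>1)) \<noteq> {}" using True x a1 by simp
      then show "Tbar_inv g2 s (Tbar g1 s x) = \<alpha>2 * cf (x / \<alpha>1)"
        unfolding cg cf_def by (rule Inf_scale[OF a2]) (auto simp: Sf_def)
    qed
  next
    case False
    then obtain z0 where z0: "z0 \<ge> 0" "Sf (T1 z0) = {}" by blast
    have gt: "\<And>y. y \<ge> 0 \<Longrightarrow> T2 y > T1 z0" using z0(2) by (auto simp: Sf_def)
    have T1z0: "T1 z0 = 0"
    proof (rule ccontr)
      assume "T1 z0 \<noteq> 0"
      then have "T1 z0 > 0" using T1nn[of z0] by simp
      then obtain y where "y \<ge> 0" "T2 y < T1 z0" using T2small by blast
      with gt[of y] show False by linarith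
    qed
    show "convex_on {0..} (\<lambda>x. Tbar_inv g2 s (Tbar g1 s x))"
    proof (cases "T1 0 = 0")
      case True
      have z: "T1 z = 0" if "z \<ge> 0" for z using T1mono[of 0 z] that True T1nn[of z] by simp
      show ?thesis
      proof (rule conv_const)
        fix x :: real assume x: "x \<ge> 0"
        have "T1 (x / \<alpha>1) = 0" using z[of "x / \<alpha>1"] x a1 by simp
        then have "Sf (T1 (x / \<alpha>1)) = {}"
          using gt T1z0 unfolding Sf_def by (auto simp del: Tbar.simps dest: leD)
        then show "Tbar_inv g2 s (Tbar g1 s x) = Inf ((\<lambda>y. \<alpha>2 * y) ` {})" unfolding cg by simp
      qed
    next
      case False
      then have T10: "T1 0 > 0" using T1nn[of 0] by simp
      define K where "K = max (cf 0) (cf z0)"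
      have Kb: "cf z \<le> K" if "z \<in> {0..z0}" for z
        unfolding K_def using that
        by (intro convex_on_le_max convex_on_subset[OF cvf]) auto
      define y' where "y' = max K 0 + 1"
      have y'0: "y' \<ge> 0" unfolding y'_def by simp
      define e where "e = T2 y'"
      have e0: "e > 0" unfolding e_def using gt[OF y'0] T1z0 by simp
      define \<epsilon> where "\<epsilon> = min (e / 2) (T1 0)"
      have eps: "\<epsilon> > 0" "\<epsilon> < e" "\<epsilon> \<le> T1 0" using e0 T10 by (auto simp: \<epsilon>_def)
      obtain z where z: "0 \<le> z" "z \<le> z0" "T1 z = \<epsilon>"
      proof -
        have "continuous_on {0..z0} T1" by (rule continuous_on_subset[OF T1cont]) auto
        then show ?thesis using IVT2'[of T1 z0 \<epsilon> 0] T1z0 eps z0(1) that by auto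
      qed
      obtain y1 where y1: "y1 \<ge> 0" "T2 y1 < \<epsilon>" using T2small[OF eps(1)] by blast
      have ne: "Sf \<epsilon> \<noteq> {}" using y1 by (auto simp: Sf_def intro!: exI[of _ y1])
      have "y' \<le> Inf (Sf \<epsilon>)"
      proof (rule cInf_greatest[OF ne])
        fix y assume y: "y \<in> Sf \<epsilon>"
        show "y' \<le> y"
        proof (rule ccontr)
          assume "\<not> y' \<le> y"
          then have "T2 y' \<le> T2 y" using y by (intro T2mono) (auto simp: Sf_def)
          then show False using y eps unfolding e_def Sf_def by auto
        qed
      qed
      then have "y' \<le> cf z" unfolding cf_def z(3) .
      moreover have "cf z \<le> K" using Kb z(1,2) by simp
      ultimately show ?thesis unfolding y'_def by linarith
    qed
  qed
qed

end
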